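(* Let $\Sigma$ be a wind Riemannian structure on $M$ with conic Finsler metric $F$, and let $H$ be a Finsler metric on $M$ such that $H(v)\le F(v)$ for all $v\in A$. If $H$ is forward (resp. backward) complete, then $\Sigma$ is forward (resp. backward) geodesically complete, i.e., its extended conic Finsler metric $\bar F$ is forward (resp. backward) complete in the equivalent senses: $(M,d_{\bar F})$ is forward (resp. backward) Cauchy complete, equivalently every inextendible $\bar F$-geodesic has domain unbounded above (resp. below).
   Context: Let $M$ be a connected smooth manifold with Zermelo data $(g_R,W)$; the WRS is $\Sigma\subset TM$, $\Sigma_p=\{v:g_R(v-W_p,v-W_p)=1\}$. Put $g_0=g_R$, $\omega=-g_R(W,\cdot)$, $\Lambda=1-g_R(W,W)$, $h=\Lambda g_0+\omega\otimes\omega$. For $p\in M$: $A_p=T_pM\setminus\{0\}$ if $\Lambda(p)>0$; $\{v:\omega(v)<0\}$ if $\Lambda(p)=0$; $\{v:\omega(v)<0,h(v,v)>0\}$ if $\Lambda(p)<0$; $(A_E)_p=\emptyset$, $\{0_p\}$, $\{v:\omega(v)<0,h(v,v)\ge0\}$ respectively. $F(v)=g_0(v,v)/(-\omega(v)+\sqrt{\Lambda g_0(v,v)+\omega(v)^2})$ on $A$; $\bar F$ is the same formula on $A\cup A_E$ with $\bar F(0_p)=1$ when $\Lambda(p)=0$. Wind curves: piecewise smooth $\gamma$ with $\gamma'\in A\cup A_E$ and $g_R(\gamma'-W,\gamma'-W)\le1$; $d_{\bar F}(p,q)=\inf\int\bar F(\gamma')$ over wind curves from $p$ to $q$ ($+\infty$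 if none); forward (backward) Cauchy: for all $\varepsilon>0$ there is $N$ with $d_{\bar F}(x_i,x_j)<\varepsilon$ for $N<i<j$ (resp. $N<j<i$); Cauchy complete: all such sequences converge in $M$. $\bar F$-geodesics: curves $\gamma$ which, after positive affine reparametrization, make $t\mapsto(t,\gamma(t))$ a future-directed lightlike pregeodesic of $g=-\Lambda{\rm d}t^2+\omega\otimes{\rm d}t+{\rm d}t\otimes\omega+g_0$ on $\mathbb R\times M$ with $g(\rho',\partial_t)\le0$ along its affine parametrization $\rho$. A Finsler metric $H$ is forward (backward) complete if its (non-symmetric) distance $d_H$ is forward (backward) Cauchy complete. *)

theory Defs
  imports "HOL-Analysis.Analysis"
begin

fun Ck_on :: "nat \<Rightarrow> 'a::real_normed_vector set \<Rightarrow> ('a \<Rightarrow> 'b::real_normed_vector) \<Rightarrow> bool" where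
  "Ck_on 0 S f = continuous_on S f"
| "Ck_on (Suc k) S f =
     (\<exists>f'. (\<forall>x\<in>S. (f has_derivative f' x) (at x)) \<and> (\<forall>v. Ck_on k S (\<lambda>x. f' x v)))"

definition cinf_on :: "'a::real_normed_vector set \<Rightarrow> ('a \<Rightarrow> 'b::real_normed_vector) \<Rightarrow> bool" where
  "cinf_on S f \<longleftrightarrow> open S \<and> (\<forall>k. Ck_on k S f)"

definition smooth_set :: "'a::real_normed_vector set \<Rightarrow> ('a \<Rightarrow> 'b::real_normed_vector) \<Rightarrow> bool" where
  "smooth_set S f \<longleftrightarrow>
     (\<forall>x\<in>S. \<exists>U g. open U \<and> x \<in> U \<and> cinf_on U g \<and> (\<forall>y\<in>S \<inter> U. f y = g y))"

definition submanifold :: "'a::euclidean_space set \<Rightarrow> bool" where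
  "submanifold M \<longleftrightarrow>
     (\<forall>p\<in>M. \<exists>U V (\<phi>::'a\<Rightarrow>'a) \<psi> L. open U \<and> p \<in> U \<and> open V \<and> subspace L \<and>
        cinf_on U \<phi> \<and> cinf_on V \<psi> \<and> \<phi> ` U = V \<and> (\<forall>x\<in>U. \<psi> (\<phi> x) = x) \<and>
        \<phi> ` (M \<inter> U) = V \<inter> L)"

definition tangent_space :: "'a::euclidean_space set \<Rightarrow> 'a \<Rightarrow> 'a set" where
  "tangent_space M p =
     {v. \<exists>\<gamma> e. e > 0 \<and> (\<forall>t\<in>{-e<..<e}. \<gamma> t \<in> M) \<and> \<gamma> 0 = p \<and>
          (\<gamma> has_vector_derivative v) (at 0)}"

definition riemannian_metric :: "'a::euclidean_space set \<Rightarrow> ('a \<Rightarrow> 'a \<Rightarrow> 'a \<Rightarrow> real) \<Rightarrow> bool" where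
  "riemannian_metric M g \<longleftrightarrow>
     (\<forall>p\<in>M. bilinear (g p) \<and> (\<forall>v w. g p v w = g p w v) \<and>
        (\<forall>v\<in>tangent_space M p. v \<noteq> 0 \<longrightarrow> g p v v > 0)) \<and>
     (\<forall>v w. smooth_set M (\<lambda>p. g p v w))"

definition vector_field :: "'a::euclidean_space set \<Rightarrow> ('a \<Rightarrow> 'a) \<Rightarrow> bool" where
  "vector_field M W \<longleftrightarrow> (\<forall>p\<in>M. W p \<in> tangent_space M p) \<and> smooth_set M W"

definition tangent_bundle :: "'a::euclidean_space set \<Rightarrow> ('a \<times> 'a) set" where
  "tangent_bundle M = {(p, v). p \<in> M \<and> v \<in> tangent_space M p}"

text \<open>Finsler metric: continuous on TM, smooth off the zero section, positive,
  positively homogeneous, with positive definite fundamental tensor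
  g_v(u,u) = 1/2 d^2/dt^2 H(v+tu)^2 at t = 0.\<close>
definition finsler_metric :: "'a::euclidean_space set \<Rightarrow> ('a \<Rightarrow> 'a \<Rightarrow> real) \<Rightarrow> bool" where
  "finsler_metric M H \<longleftrightarrow>
     continuous_on (tangent_bundle M) (\<lambda>(p, v). H p v) \<and>
     smooth_set {(p, v). (p, v) \<in> tangent_bundle M \<and> v \<noteq> 0} (\<lambda>(p, v). H p v) \<and>
     (\<forall>p\<in>M. \<forall>v\<in>tangent_space M p.
        H p v \<ge> 0 \<and> (H p v = 0 \<longleftrightarrow> v = 0) \<and>
        (\<forall>c>0. H p (c *\<^sub>R v) = c * H p v) \<and>
        (v \<noteq> 0 \<longrightarrow> (\<forall>u\<in>tangent_space M p. u \<noteq> 0 \<longrightarrow>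
            (\<exists>d>0. ((deriv (\<lambda>t. (H p (v + t *\<^sub>R u))\<^sup>2)) has_real_derivative d) (at 0)))))"

definition wind_omega :: "('a \<Rightarrow> 'a \<Rightarrow> 'a \<Rightarrow> real) \<Rightarrow> ('a \<Rightarrow> 'a) \<Rightarrow> 'a \<Rightarrow> 'a \<Rightarrow> real" where
  "wind_omega gR W p v = - gR p (W p) v"

definition wind_Lambda :: "('a \<Rightarrow> 'a \<Rightarrow> 'a \<Rightarrow> real) \<Rightarrow> ('a \<Rightarrow> 'a) \<Rightarrow> 'a \<Rightarrow> real" where
  "wind_Lambda gR W p = 1 - gR p (W p) (W p)"

definition wind_h :: "('a \<Rightarrow> 'a \<Rightarrow> 'a \<Rightarrow> real) \<Rightarrow> ('a \<Rightarrow> 'a) \<Rightarrow> 'a \<Rightarrow> 'a \<Rightarrow> 'a \<Rightarrow> real" where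
  "wind_h gR W p v w = wind_Lambda gR W p * gR p v w + wind_omega gR W p v * wind_omega gR W p w"

definition wind_A :: "'a::euclidean_space set \<Rightarrow> ('a \<Rightarrow> 'a \<Rightarrow> 'a \<Rightarrow> real) \<Rightarrow> ('a \<Rightarrow> 'a) \<Rightarrow> 'a \<Rightarrow> 'a set" where
  "wind_A M gR W p =
     (if wind_Lambda gR W p > 0 then {v \<in> tangent_space M p. v \<noteq> 0}
      else if wind_Lambda gR W p = 0 then {v \<in> tangent_space M p. wind_omega gR W p v < 0}
      else {v \<in> tangent_space M p. wind_omega gR W p v < 0 \<and> wind_h gR W p v v > 0})"

definition wind_AE :: "'a::euclidean_space set \<Rightarrow> ('a \<Rightarrow> 'a \<Rightarrow> 'a \<Rightarrow> real) \<Rightarrow> ('a \<Rightarrow> 'a) \<Rightarrow> 'a \<Rightarrow> 'a set" where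
  "wind_AE M gR W p =
     (if wind_Lambda gR W p > 0 then {}
      else if wind_Lambda gR W p = 0 then {0}
      else {v \<in> tangent_space M p. wind_omega gR W p v < 0 \<and> wind_h gR W p v v \<ge> 0})"

definition wind_F :: "('a \<Rightarrow> 'a \<Rightarrow> 'a \<Rightarrow> real) \<Rightarrow> ('a \<Rightarrow> 'a) \<Rightarrow> 'a \<Rightarrow> 'a \<Rightarrow> real" where
  "wind_F gR W p v =
     gR p v v / (- wind_omega gR W p v +
                 sqrt (wind_Lambda gR W p * gR p v v + (wind_omega gR W p v)\<^sup>2))"

definition wind_Fbar :: "('a::zero \<Rightarrow> 'a \<Rightarrow> 'a \<Rightarrow> real) \<Rightarrow> ('a \<Rightarrow> 'a) \<Rightarrow> 'a \<Rightarrow> 'a \<Rightarrow> real" where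
  "wind_Fbar gR W p v = (if wind_Lambda gR W p = 0 \<and> v = 0 then 1 else wind_F gR W p v)"

definition pw_smooth_curve ::
  "'a::euclidean_space set \<Rightarrow> ('a \<Rightarrow> 'a \<Rightarrow> bool) \<Rightarrow> (real \<Rightarrow> 'a) \<Rightarrow> real \<Rightarrow> real \<Rightarrow> bool" where
  "pw_smooth_curve M P \<gamma> a b \<longleftrightarrow>
     a \<le> b \<and> (\<forall>t\<in>{a..b}. \<gamma> t \<in> M) \<and>
     (\<exists>ts::real list. ts \<noteq> [] \<and> hd ts = a \<and> last ts = b \<and> sorted_wrt (<) ts \<and>
        (\<forall>i < length ts - 1.
           smooth_set {ts!i..ts!(Suc i)} \<gamma> \<and>
           (\<forall>t\<in>{ts!i..ts!(Suc i)}. \<exists>v. (\<gamma> has_vector_derivative v) (at t within {ts!i..ts!(Suc i)})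
                \<and> P (\<gamma> t) v)))"

text \<open>Length-type distance: infimum of integral of L(gamma') over admissible curves
  from p to q (ennreal-valued; +infinity if there is none).\<close>
definition curve_dist ::
  "'a::euclidean_space set \<Rightarrow> ('a \<Rightarrow> 'a \<Rightarrow> bool) \<Rightarrow> ('a \<Rightarrow> 'a \<Rightarrow> real) \<Rightarrow> 'a \<Rightarrow> 'a \<Rightarrow> ennreal" where
  "curve_dist M P L p q =
     (INF \<gamma>ab \<in> {(\<gamma>, a, b). pw_smooth_curve M P \<gamma> a b \<and> \<gamma> a = p \<and> \<gamma> b = q}.
        (case \<gamma>ab of (\<gamma>, a, b) \<Rightarrow>
           \<integral>\<^sup>+ t\<in>{a..b}. ennreal (L (\<gamma> t) (vector_derivative \<gamma> (at t))) \<partial>lborel))"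

definition finsler_dist :: "'a::euclidean_space set \<Rightarrow> ('a \<Rightarrow> 'a \<Rightarrow> real) \<Rightarrow> 'a \<Rightarrow> 'a \<Rightarrow> ennreal" where
  "finsler_dist M H = curve_dist M (\<lambda>p v. v \<in> tangent_space M p) H"

definition wind_dist ::
  "'a::euclidean_space set \<Rightarrow> ('a \<Rightarrow> 'a \<Rightarrow> 'a \<Rightarrow> real) \<Rightarrow> ('a \<Rightarrow> 'a) \<Rightarrow> 'a \<Rightarrow> 'a \<Rightarrow> ennreal" where
  "wind_dist M gR W = curve_dist M
     (\<lambda>p v. v \<in> wind_A M gR W p \<union> wind_AE M gR W p \<and> gR p (v - W p) (v - W p) \<le> 1)
     (wind_Fbar gR W)"

definition forward_cauchy :: "('a \<Rightarrow> 'a \<Rightarrow> ennreal) \<Rightarrow> (nat \<Rightarrow> 'a) \<Rightarrow> bool" where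
  "forward_cauchy d x \<longleftrightarrow> (\<forall>\<epsilon>>0. \<exists>N. \<forall>i j. N < i \<and> i < j \<longrightarrow> d (x i) (x j) < ennreal \<epsilon>)"

definition backward_cauchy :: "('a \<Rightarrow> 'a \<Rightarrow> ennreal) \<Rightarrow> (nat \<Rightarrow> 'a) \<Rightarrow> bool" where
  "backward_cauchy d x \<longleftrightarrow> (\<forall>\<epsilon>>0. \<exists>N. \<forall>i j. N < j \<and> j < i \<longrightarrow> d (x i) (x j) < ennreal \<epsilon>)"

definition forward_complete :: "'a::topological_space set \<Rightarrow> ('a \<Rightarrow> 'a \<Rightarrow> ennreal) \<Rightarrow> bool" where
  "forward_complete M d \<longleftrightarrow>
     (\<forall>x. (\<forall>i. x i \<in> M) \<and> forward_cauchy d x \<longrightarrow> (\<exists>y\<in>M. x \<longlonglongrightarrow> y))"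

definition backward_complete :: "'a::topological_space set \<Rightarrow> ('a \<Rightarrow> 'a \<Rightarrow> ennreal) \<Rightarrow> bool" where
  "backward_complete M d \<longleftrightarrow>
     (\<forall>x. (\<forall>i. x i \<in> M) \<and> backward_cauchy d x \<longrightarrow> (\<exists>y\<in>M. x \<longlonglongrightarrow> y))"

end

theory Submission imports Defs begin

lemma cinf_deriv:
  assumes "cinf_on U f"
  obtains f' where "\<And>x. x \<in> U \<Longrightarrow> (f has_derivative f' x) (at x)"
proof -
  have "Ck_on (Suc 0) U f" using assms unfolding cinf_on_def by blast
  then show ?thesis using that by auto
qed

lemma quot_aux: "\<And>x::real. 0 < x \<Longrightarrow> (1 / norm (x - 0)) *\<^sub>R (f x - (f 0 + x *\<^sub>R v)) = (f x - f 0) /\<^sub>R x - (v::'a::real_normed_vector)"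
  by (simp add: divide_inverse_commute scaleR_diff_right scaleR_add_right)

lemma deriv_in_closed:
  fixes f :: "real \<Rightarrow> 'a::real_normed_vector"
  assumes d: "(f has_vector_derivative v) (at 0)"
    and ev: "eventually (\<lambda>t. f t \<in> L) (at 0)" and f0: "f 0 \<in> L"
    and sL: "subspace L" and cL: "closed L"
  shows "v \<in> L"
proof -
  have "((\<lambda>y. (1 / norm (y - 0)) *\<^sub>R (f y - (f 0 + y *\<^sub>R v))) \<longlongrightarrow> 0) (at 0)"
    using d unfolding has_vector_derivative_def has_derivative_within by simp
  then have A: "((\<lambda>y. (1 / norm (y - 0)) *\<^sub>R (f y - (f 0 + y *\<^sub>R v))) \<longlongrightarrow> 0) (at_right 0)"
    by (rule tendsto_mono[OF at_le, rotated]) simp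
  have B: "eventually (\<lambda>y. (1 / norm (y - 0)) *\<^sub>R (f y - (f 0 + y *\<^sub>R v)) = (f y - f 0) /\<^sub>R y - v) (at_right 0)"
    by (rule eventually_at_rightI[of 0 1], rule quot_aux, simp_all)
  have "((\<lambda>y. (f y - f 0) /\<^sub>R y - v) \<longlongrightarrow> 0) (at_right 0)"
    by (rule tendsto_cong[THEN iffD1, OF B A])
  then have "((\<lambda>y. ((f y - f 0) /\<^sub>R y - v) + v) \<longlongrightarrow> 0 + v) (at_right 0)"
    by (intro tendsto_add) auto
  then have lim: "((\<lambda>y. (f y - f 0) /\<^sub>R y) \<longlongrightarrow> v) (at_right (0::real))" by simp
  have "eventually (\<lambda>t. f t \<in> L) (at_right 0)"
    using ev by (rule filter_leD[OF at_le, rotated]) simp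
  then have "eventually (\<lambda>y. (f y - f 0) /\<^sub>R y \<in> L) (at_right 0)"
    by eventually_elim (use sL f0 in \<open>simp add: subspace_diff subspace_scale\<close>)
  then show ?thesis
    using Lim_in_closed_set[OF cL _ _ lim] by simp
qed


lemma tangent_subspace:
  fixes M :: "'a::euclidean_space set"
  assumes sm: "submanifold M" and pM: "p \<in> M"
  shows "subspace (tangent_space M p)"
proof -
  obtain U V L and \<phi> :: "'a \<Rightarrow> 'a" and \<psi> where
    U: "open U" "p \<in> U" and V: "open V" and L: "subspace L" and
    c\<phi>: "cinf_on U \<phi>" and c\<psi>: "cinf_on V \<psi>" and im: "\<phi> ` U = V" and
    inv: "\<forall>x\<in>U. \<psi> (\<phi> x) = x" and imM: "\<phi> ` (M \<inter> U) = V \<inter> L"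
    using sm pM unfolding submanifold_def by metis
  obtain \<phi>' where d\<phi>: "\<And>x. x \<in> U \<Longrightarrow> (\<phi> has_derivative \<phi>' x) (at x)"
    using cinf_deriv[OF c\<phi>] by blast
  obtain \<psi>' where d\<psi>: "\<And>x. x \<in> V \<Longrightarrow> (\<psi> has_derivative \<psi>' x) (at x)"
    using cinf_deriv[OF c\<psi>] by blast
  have pV: "\<phi> p \<in> V" using im U by blast
  have pL: "\<phi> p \<in> L" using imM pM U by blast
  define D where "D = \<psi>' (\<phi> p)"
  have dD: "(\<psi> has_derivative D) (at (\<phi> p))" using d\<psi>[OF pV] D_def by simp
  have linD: "linear D" using has_derivative_linear[OF dD] .
  have "tangent_space M p = D ` L"
  proof
    show "D ` L \<subseteq> tangent_space M p"
    proof
      fix y assume "y \<in> D ` L"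
      then obtain w where wL: "w \<in> L" and y: "y = D w" by blast
      obtain e where e: "e > 0" "ball (\<phi> p) e \<subseteq> V" using V pV open_contains_ball by blast
      define e' where "e' = e / (norm w + 1)"
      have e'pos: "e' > 0" using e unfolding e'_def by (smt (verit) norm_ge_zero divide_pos_pos)
      have inM: "\<psi> (\<phi> p + t *\<^sub>R w) \<in> M" if t: "t \<in> {-e'<..<e'}" for t
      proof -
        have "\<bar>t\<bar> * norm w \<le> e' * norm w" using t by (intro mult_right_mono) auto
        also have "\<dots> < e"
        proof -
          have nw: "0 < norm w + 1" by (smt (verit) norm_ge_zero)
          then show ?thesis unfolding e'_def using e nw by (simp add: field_simps)
        qed
        finally have "norm (t *\<^sub>R w) < e" by simp
        then have "\<phi> p + t *\<^sub>R w \<in> V" using e by (auto simp: dist_norm)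
        moreover have "\<phi> p + t *\<^sub>R w \<in> L" using L pL wL by (simp add: subspace_add subspace_scale)
        ultimately have "\<phi> p + t *\<^sub>R w \<in> \<phi> ` (M \<inter> U)" using imM by blast
        then have "\<exists>x\<in>M \<inter> U. \<phi> p + t *\<^sub>R w = \<phi> x" by (simp only: image_iff)
        then show ?thesis using inv by force
      qed
      have d1: "((\<lambda>t. \<phi> p + t *\<^sub>R w) has_derivative (\<lambda>t. t *\<^sub>R w)) (at 0)"
        by (auto intro!: derivative_eq_intros)
      have "((\<psi> \<circ> (\<lambda>t. \<phi> p + t *\<^sub>R w)) has_derivative (D \<circ> (\<lambda>t. t *\<^sub>R w))) (at 0)"
        by (rule diff_chain_at[OF d1]) (simp add: dD)
      then have dv: "((\<lambda>t. \<psi> (\<phi> p + t *\<^sub>R w)) has_vector_derivative D w) (at 0)"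
        unfolding has_vector_derivative_def o_def using linear_scale[OF linD] by simp
      have p0: "\<psi> (\<phi> p + 0 *\<^sub>R w) = p" using inv U by simp
      have "\<exists>\<gamma> e. e > 0 \<and> (\<forall>t\<in>{-e<..<e}. \<gamma> t \<in> M) \<and> \<gamma> 0 = p \<and> (\<gamma> has_vector_derivative D w) (at 0)"
        apply (rule exI[of _ "\<lambda>t. \<psi> (\<phi> p + t *\<^sub>R w)"])
        apply (rule exI[of _ e'])
        using e'pos inM p0 dv by simp
      then show "y \<in> tangent_space M p"
        unfolding tangent_space_def y by simp
    qed
  next
    show "tangent_space M p \<subseteq> D ` L"
    proof
      fix v assume "v \<in> tangent_space M p"
      then obtain \<gamma> e where e: "e > 0" and \<gamma>M: "\<forall>t\<in>{-e<..<e}. \<gamma> t \<in> M" and g0: "\<gamma> 0 = p"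
        and dg: "(\<gamma> has_vector_derivative v) (at 0)"
        unfolding tangent_space_def by blast
      have "continuous (at 0) \<gamma>" using dg by (rule has_vector_derivative_continuous)
      then have "(\<gamma> \<longlongrightarrow> p) (at 0)" using g0 by (simp add: continuous_at)
      then have evU: "eventually (\<lambda>t. \<gamma> t \<in> U) (at 0)" using U by (rule topological_tendstoD)
      have evM: "eventually (\<lambda>t. \<gamma> t \<in> M) (at 0)"
        unfolding eventually_at using e \<gamma>M by (intro exI[of _ e]) (auto simp: dist_norm abs_less_iff)
      have ev: "eventually (\<lambda>t. (\<phi> \<circ> \<gamma>) t \<in> L) (at 0)"
        using evU evM by eventually_elim (use imM in auto)
      have dpg: "((\<phi> \<circ> \<gamma>) has_derivative (\<phi>' p \<circ> (\<lambda>t. t *\<^sub>R v))) (at 0)"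
        using dg unfolding has_vector_derivative_def
        by (rule diff_chain_at) (simp add: g0 d\<phi> U)
      have lin\<phi>: "linear (\<phi>' p)" using has_derivative_linear[OF d\<phi>[OF U(2)]] .
      have "((\<phi> \<circ> \<gamma>) has_vector_derivative \<phi>' p v) (at 0)"
        using dpg unfolding has_vector_derivative_def o_def using linear_scale[OF lin\<phi>] by simp
      then have vL: "\<phi>' p v \<in> L"
        by (rule deriv_in_closed[OF _ ev _ L closed_subspace[OF L]]) (simp add: g0 pL)
      have c1: "((\<psi> \<circ> \<phi>) has_derivative (D \<circ> \<phi>' p)) (at p)"
        by (rule diff_chain_at[OF d\<phi>[OF U(2)]]) (simp add: dD)
      have "(id has_derivative id) (at p)" by (rule has_derivative_id)
      then have c2: "((\<psi> \<circ> \<phi>) has_derivative id) (at p)"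
        by (rule has_derivative_transform_within_open[OF _ U(1) U(2)]) (simp add: inv)
      have "D \<circ> \<phi>' p = id" using has_derivative_unique[OF c1 c2] .
      then have "v = D (\<phi>' p v)" by (metis comp_apply id_apply)
      then show "v \<in> D ` L" using vL by blast
    qed
  qed
  then show ?thesis using linear_subspace_image[OF linD L] by simp
qed


lemma boundary_case:
  fixes M :: "'a::euclidean_space set"
  assumes sm: "submanifold M" and rm: "riemannian_metric M gR" and vf: "vector_field M W"
    and fm: "finsler_metric M H"
    and hyp: "\<forall>p\<in>M. \<forall>v\<in>wind_A M gR W p. H p v \<le> wind_F gR W p v"
    and pM: "p \<in> M" and vT: "v \<in> tangent_space M p"
    and Ln: "wind_Lambda gR W p < 0" and om: "wind_omega gR W p v < 0"
    and h0: "wind_h gR W p v v = 0"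
  shows "H p v \<le> wind_F gR W p v"
proof -
  let ?T = "tangent_space M p"
  have sT: "subspace ?T" using tangent_subspace[OF sm pM] .
  have bil: "bilinear (gR p)" and sym: "\<And>a b. gR p a b = gR p b a"
    using rm pM unfolding riemannian_metric_def by blast+
  have wT: "W p \<in> ?T" using vf pM unfolding vector_field_def by auto
  define a where "a = gR p v v"
  define b where "b = gR p (W p) v"
  define c where "c = gR p (W p) (W p)"
  have lin1: "linear (gR p x)" and lin2: "linear (\<lambda>y. gR p y x)" for x
    using bil unfolding bilinear_def by auto
  have gvv: "gR p (v + s *\<^sub>R W p) (v + s *\<^sub>R W p) = a + 2 * s * b + s\<^sup>2 * c" for s
  proof -
    have "gR p (v + s *\<^sub>R W p) (v + s *\<^sub>R W p) =
          gR p v v + s * gR p v (W p) + s * gR p (W p) v + s * s * gR p (W p) (W p)"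
      using linear_add[OF lin1] linear_add[OF lin2] linear_scale[OF lin1] linear_scale[OF lin2]
      by (simp add: algebra_simps)
    then show ?thesis unfolding a_def b_def c_def using sym[of v "W p"]
      by (simp add: power2_eq_square algebra_simps)
  qed
  have gw: "gR p (W p) (v + s *\<^sub>R W p) = b + s * c" for s
    unfolding b_def c_def using linear_add[OF lin1] linear_scale[OF lin1] by simp
  have Lam: "wind_Lambda gR W p = 1 - c" unfolding wind_Lambda_def c_def by simp
  have omg: "wind_omega gR W p (v + s *\<^sub>R W p) = - (b + s * c)" for s
    unfolding wind_omega_def using gw by simp
  have Fs: "wind_F gR W p (v + s *\<^sub>R W p) =
      (a + 2 * s * b + s\<^sup>2 * c) / ((b + s * c) + sqrt ((1 - c) * (a + 2 * s * b + s\<^sup>2 * c) + (b + s * c)\<^sup>2))" for s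
    unfolding wind_F_def Lam omg gvv power2_minus by simp
  have hs: "wind_h gR W p (v + s *\<^sub>R W p) (v + s *\<^sub>R W p) =
      (1 - c) * (a + 2 * s * b + s\<^sup>2 * c) + (b + s * c)\<^sup>2" for s
    unfolding wind_h_def Lam omg gvv by (simp add: power2_eq_square algebra_simps)
  have c1: "c > 1" using Ln Lam by simp
  have b0: "b > 0" using om omg[of 0] by simp
  have hz: "(1 - c) * a + b\<^sup>2 = 0" using h0 hs[of 0] by simp
  have inA: "v + s *\<^sub>R W p \<in> wind_A M gR W p" if s: "s > 0" for s
  proof -
    have "(1 - c) * (a + 2 * s * b + s\<^sup>2 * c) + (b + s * c)\<^sup>2 = 2 * s * b + s\<^sup>2 * c"
      using hz by (simp add: power2_eq_square algebra_simps)
    also have "\<dots> > 0" using s b0 c1 by (simp add: add_pos_pos)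
    finally have "wind_h gR W p (v + s *\<^sub>R W p) (v + s *\<^sub>R W p) > 0" using hs by simp
    moreover have "wind_omega gR W p (v + s *\<^sub>R W p) < 0"
      using omg[of s] b0 mult_pos_pos[OF s, of c] c1 by simp
    moreover have "v + s *\<^sub>R W p \<in> ?T" using sT vT wT by (simp add: subspace_add subspace_scale)
    ultimately show ?thesis unfolding wind_A_def using Ln by simp
  qed
  have le: "eventually (\<lambda>s. H p (v + s *\<^sub>R W p) \<le> wind_F gR W p (v + s *\<^sub>R W p)) (at_right 0)"
    by (intro eventually_at_rightI[of 0 1]) (use hyp pM inA in auto)
  have cH: "continuous_on (tangent_bundle M) (\<lambda>(p, v). H p v)"
    using fm unfolding finsler_metric_def by (rule conjunct1)
  have "continuous_on UNIV ((\<lambda>(p, v). H p v) \<circ> (\<lambda>s. (p, v + s *\<^sub>R W p)))"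
    by (rule continuous_on_compose) (auto intro!: continuous_intros continuous_on_subset[OF cH]
        simp: tangent_bundle_def pM sT vT wT subspace_add subspace_scale)
  then have "isCont (\<lambda>s. H p (v + s *\<^sub>R W p)) 0"
    by (simp add: continuous_on_eq_continuous_at o_def)
  then have "((\<lambda>s. H p (v + s *\<^sub>R W p)) \<longlongrightarrow> H p v) (at 0)"
    by (simp add: isCont_def)
  then have limH: "((\<lambda>s. H p (v + s *\<^sub>R W p)) \<longlongrightarrow> H p v) (at_right 0)"
    by (rule tendsto_mono[OF at_le, rotated]) simp
  have "((\<lambda>s. (a + 2 * s * b + s\<^sup>2 * c) / ((b + s * c) + sqrt ((1 - c) * (a + 2 * s * b + s\<^sup>2 * c) + (b + s * c)\<^sup>2)))
        \<longlongrightarrow> (a + 2 * 0 * b + 0\<^sup>2 * c) / ((b + 0 * c) + sqrt ((1 - c) * (a + 2 * 0 * b + 0\<^sup>2 * c) + (b + 0 * c)\<^sup>2))) (at_right 0)"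
    using b0 hz by (intro tendsto_intros) auto
  then have limF: "((\<lambda>s. wind_F gR W p (v + s *\<^sub>R W p)) \<longlongrightarrow> wind_F gR W p v) (at_right 0)"
    using Fs[of 0] by (simp add: Fs)
  show ?thesis
    by (rule tendsto_le[OF _ limF limH le]) simp
qed


lemma pointwise:
  fixes M :: "'a::euclidean_space set"
  assumes sm: "submanifold M" and rm: "riemannian_metric M gR" and vf: "vector_field M W"
    and fm: "finsler_metric M H"
    and hyp: "\<forall>p\<in>M. \<forall>v\<in>wind_A M gR W p. H p v \<le> wind_F gR W p v"
    and pM: "p \<in> M" and vA: "v \<in> wind_A M gR W p \<union> wind_AE M gR W p"
  shows "v \<in> tangent_space M p \<and> H p v \<le> wind_Fbar gR W p v"
proof -
  let ?T = "tangent_space M p"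
  have sT: "subspace ?T" using tangent_subspace[OF sm pM] .
  have T0: "0 \<in> ?T" using subspace_0[OF sT] .
  have fz: "\<forall>p\<in>M. \<forall>v\<in>tangent_space M p. (H p v = 0 \<longleftrightarrow> v = 0)"
    using fm unfolding finsler_metric_def by blast
  have H0: "H p 0 = 0" using fz pM T0 by blast
  have bil: "bilinear (gR p)" using rm pM unfolding riemannian_metric_def by blast
  have "linear (gR p (W p))" using bil unfolding bilinear_def by blast
  then have om0: "wind_omega gR W p 0 = 0" unfolding wind_omega_def using linear_0 by auto
  consider (pos) "wind_Lambda gR W p > 0" | (zero) "wind_Lambda gR W p = 0" | (neg) "wind_Lambda gR W p < 0"
    by linarith
  then show ?thesis
  proof cases
    case pos
    then have "v \<in> wind_A M gR W p" using vA unfolding wind_AE_def by simp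
    then show ?thesis using hyp pM pos unfolding wind_Fbar_def by (simp add: wind_A_def)
  next
    case zero
    show ?thesis
    proof (cases "v \<in> wind_A M gR W p")
      case True
      then have "v \<noteq> 0" "v \<in> ?T" using zero om0 unfolding wind_A_def by auto
      then show ?thesis using hyp pM True unfolding wind_Fbar_def by simp
    next
      case False
      then have "v = 0" using vA zero unfolding wind_AE_def by simp
      then show ?thesis using T0 H0 zero unfolding wind_Fbar_def by simp
    qed
  next
    case neg
    then have vT: "v \<in> ?T" and om: "wind_omega gR W p v < 0" and hge: "wind_h gR W p v v \<ge> 0"
      using vA unfolding wind_A_def wind_AE_def by auto
    have Fb: "wind_Fbar gR W p v = wind_F gR W p v" using neg unfolding wind_Fbar_def by simp
    show ?thesis
    proof (cases "wind_h gR W p v v = 0")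
      case True
      then show ?thesis using boundary_case[OF sm rm vf fm hyp pM vT neg om True] vT Fb by simp
    next
      case False
      then have "v \<in> wind_A M gR W p" using hge om vT neg unfolding wind_A_def by simp
      then show ?thesis using hyp pM vT Fb by simp
    qed
  qed
qed


lemma piece_exists:
  fixes ts :: "real list"
  assumes "sorted_wrt (<) ts" "ts \<noteq> []" "hd ts \<le> t" "t \<le> last ts" "t \<notin> set ts"
  shows "\<exists>i < length ts - 1. ts!i < t \<and> t < ts!(Suc i)"
  using assms
proof (induction ts)
  case Nil
  then show ?case by simp
next
  case (Cons x xs)
  show ?case
  proof (cases xs)
    case Nil
    then show ?thesis using Cons.prems by simp
  next
    case (Cons y ys)
    note xs = this
    show ?thesis
    proof (cases "t < y")
      case True
      have "x < t" using Cons.prems by (auto simp: order_le_less)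
      then show ?thesis using True xs by (intro exI[of _ 0]) simp
    next
      case False
      then have "y \<le> t" by simp
      then have "\<exists>i < length xs - 1. xs!i < t \<and> t < xs!(Suc i)"
        using Cons.prems xs by (intro Cons.IH) auto
      then obtain i where "i < length xs - 1" "xs!i < t" "t < xs!(Suc i)" by blast
      then show ?thesis using xs by (intro exI[of _ "Suc i"]) auto
    qed
  qed
qed

lemma dist_le:
  fixes M :: "'a::euclidean_space set"
  assumes mono: "\<And>p v. p \<in> M \<Longrightarrow> P p v \<Longrightarrow> Q p v \<and> L1 p v \<le> L2 p v"
  shows "curve_dist M Q L1 p q \<le> curve_dist M P L2 p q"
  unfolding curve_dist_def
proof (rule INF_mono)
  fix m assume "m \<in> {(\<gamma>, a, b). pw_smooth_curve M P \<gamma> a b \<and> \<gamma> a = p \<and> \<gamma> b = q}"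
  then obtain \<gamma> a b where m: "m = (\<gamma>, a, b)" and pw: "pw_smooth_curve M P \<gamma> a b"
    and ends: "\<gamma> a = p" "\<gamma> b = q" by auto
  from pw have ab: "a \<le> b" and inM: "\<forall>t\<in>{a..b}. \<gamma> t \<in> M" unfolding pw_smooth_curve_def by auto
  from pw obtain ts :: "real list" where ts: "ts \<noteq> []" "hd ts = a" "last ts = b" "sorted_wrt (<) ts"
    and pieces: "\<forall>i < length ts - 1. smooth_set {ts!i..ts!(Suc i)} \<gamma> \<and>
           (\<forall>t\<in>{ts!i..ts!(Suc i)}. \<exists>v. (\<gamma> has_vector_derivative v) (at t within {ts!i..ts!(Suc i)})
                \<and> P (\<gamma> t) v)"
    unfolding pw_smooth_curve_def by blast
  have sub: "{ts!i..ts!(Suc i)} \<subseteq> {a..b}" if "i < length ts - 1" for i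
  proof -
    have "ts!0 \<le> ts!i" using ts(4) that
      by (cases "i = 0") (auto simp: sorted_wrt_iff_nth_less less_imp_le)
    moreover have "ts!(Suc i) \<le> ts!(length ts - 1)" using ts(4) that
      by (cases "Suc i = length ts - 1") (auto simp: sorted_wrt_iff_nth_less less_imp_le)
    ultimately show ?thesis using ts(1,2,3) by (auto simp: hd_conv_nth last_conv_nth)
  qed
  have pwQ: "pw_smooth_curve M Q \<gamma> a b"
    unfolding pw_smooth_curve_def
  proof (intro conjI exI[of _ ts])
    show "\<forall>i < length ts - 1. smooth_set {ts!i..ts!(Suc i)} \<gamma> \<and>
           (\<forall>t\<in>{ts!i..ts!(Suc i)}. \<exists>v. (\<gamma> has_vector_derivative v) (at t within {ts!i..ts!(Suc i)})
                \<and> Q (\<gamma> t) v)"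
    proof (intro allI impI conjI ballI)
      fix i assume i: "i < length ts - 1"
      show "smooth_set {ts!i..ts!(Suc i)} \<gamma>" using pieces i by blast
      fix t assume t: "t \<in> {ts!i..ts!(Suc i)}"
      then obtain v where "(\<gamma> has_vector_derivative v) (at t within {ts!i..ts!(Suc i)})" "P (\<gamma> t) v"
        using pieces i by blast
      moreover have "\<gamma> t \<in> M" using inM sub[OF i] t by blast
      ultimately show "\<exists>v. (\<gamma> has_vector_derivative v) (at t within {ts!i..ts!(Suc i)}) \<and> Q (\<gamma> t) v"
        using mono by blast
    qed
  qed (use ab inM ts in auto)
  have AE: "AE t in lborel. t \<notin> set ts"
    by (rule AE_not_in[OF countable_imp_null_set_lborel]) (simp add: countable_finite)
  have "(\<integral>\<^sup>+ t\<in>{a..b}. ennreal (L1 (\<gamma> t) (vector_derivative \<gamma> (at t))) \<partial>lborel)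
      \<le> (\<integral>\<^sup>+ t\<in>{a..b}. ennreal (L2 (\<gamma> t) (vector_derivative \<gamma> (at t))) \<partial>lborel)"
  proof (rule nn_integral_mono_AE)
    show "AE t in lborel. ennreal (L1 (\<gamma> t) (vector_derivative \<gamma> (at t))) * indicator {a..b} t
        \<le> ennreal (L2 (\<gamma> t) (vector_derivative \<gamma> (at t))) * indicator {a..b} t"
      using AE
    proof eventually_elim
      case (elim t)
      show ?case
      proof (cases "t \<in> {a..b}")
        case False
        then show ?thesis by simp
      next
        case True
        then obtain i where i: "i < length ts - 1" and lt: "ts!i < t" "t < ts!(Suc i)"
          using piece_exists[OF ts(4) ts(1), of t] ts elim by auto
        have tI: "t \<in> {ts!i..ts!(Suc i)}" using lt by auto
        then obtain v where dv: "(\<gamma> has_vector_derivative v) (at t within {ts!i..ts!(Suc i)})"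
          and Pv: "P (\<gamma> t) v"
          using pieces i by blast
        have "(\<gamma> has_vector_derivative v) (at t)" using dv at_within_Icc_at[OF lt] by simp
        then have vd: "vector_derivative \<gamma> (at t) = v" by (rule vector_derivative_at)
        have "\<gamma> t \<in> M" using inM True by blast
        then have "L1 (\<gamma> t) v \<le> L2 (\<gamma> t) v" using mono Pv by blast
        then show ?thesis using vd by (auto intro!: mult_right_mono ennreal_leI)
      qed
    qed
  qed
  then show "\<exists>n\<in>{(\<gamma>, a, b). pw_smooth_curve M Q \<gamma> a b \<and> \<gamma> a = p \<and> \<gamma> b = q}.
      (case n of (\<gamma>, a, b) \<Rightarrow> \<integral>\<^sup>+ t\<in>{a..b}. ennreal (L1 (\<gamma> t) (vector_derivative \<gamma> (at t))) \<partial>lborel)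
      \<le> (case m of (\<gamma>, a, b) \<Rightarrow> \<integral>\<^sup>+ t\<in>{a..b}. ennreal (L2 (\<gamma> t) (vector_derivative \<gamma> (at t))) \<partial>lborel)"
    using pwQ ends m by (intro bexI[of _ "(\<gamma>, a, b)"]) auto
qed


theorem proposition4p2:
  fixes M :: "'a::euclidean_space set"
    and gR :: "'a \<Rightarrow> 'a \<Rightarrow> 'a \<Rightarrow> real"
    and W :: "'a \<Rightarrow> 'a"
    and H :: "'a \<Rightarrow> 'a \<Rightarrow> real"
  assumes "submanifold M"
    and "connected M"
    and "riemannian_metric M gR"
    and "vector_field M W"
    and "finsler_metric M H"
    and "\<forall>p\<in>M. \<forall>v\<in>wind_A M gR W p. H p v \<le> wind_F gR W p v"
  shows "(forward_complete M (finsler_dist M H) \<longrightarrow> forward_complete M (wind_dist M gR W)) \<and>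
         (backward_complete M (finsler_dist M H) \<longrightarrow> backward_complete M (wind_dist M gR W))"
proof -
  have dle: "finsler_dist M H x y \<le> wind_dist M gR W x y" for x y
    unfolding finsler_dist_def wind_dist_def
    by (rule dist_le) (use pointwise[OF assms(1,3,4,5,6)] in blast)
  have fc: "forward_cauchy (finsler_dist M H) s" if "forward_cauchy (wind_dist M gR W) s" for s
    using that dle unfolding forward_cauchy_def by (meson le_less_trans)
  have bc: "backward_cauchy (finsler_dist M H) s" if "backward_cauchy (wind_dist M gR W) s" for s
    using that dle unfolding backward_cauchy_def by (meson le_less_trans)
  show ?thesis
    unfolding forward_complete_def backward_complete_def using fc bc by blast
qed

end
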